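(* Let $x\in\mathbb{R}_+^n$ and let $\mathrm{IC}(\mathbf{a}_0,\dots,\mathbf{a}_{n-1})$ be an interval circulant matrix containing $\hat A$. Then there exists $A\in\mathrm{IC}(\mathbf{a}_0,\dots,\mathbf{a}_{n-1})$ with $x\in\mathrm{Attr}(A)$ if and only if $x\in\mathrm{Attr}(\hat A)$.
   Context: Max algebra on $\mathbb{R}_+$: $\oplus=\max$, ordinary product; $\lambda(A)$ greatest max-algebraic eigenvalue (maximum cycle geometric mean); $\mathrm{Attr}(A)=\{x\in\mathbb{R}_+^n: A^{t+1}\otimes x=\lambda(A)A^t\otimes x\text{ for some }t\ge0\}$. $\mathrm{Circ}(a_0,\dots,a_{n-1})$ has entries $A_{i,j}=a_t$, $t\equiv j-i\pmod n$; $\mathrm{IC}(\mathbf{a}_0,\dots,\mathbf{a}_{n-1})$ is the set of all $\mathrm{Circ}(a_0,\dots,a_{n-1})$ with $a_t\in\mathbf{a}_t$, each $\mathbf{a}_t\subseteq\mathbb{R}_+$ a nonempty interval of one of the forms $[\underline{a}_t,\overline{a}_t]$, $(\underline{a}_t,\overline{a}_t)$, $(\underline{a}_t,\overline{a}_t]$, $[\underline{a}_t,\overline{a}_t)$. $\underline a=\max_k\underline a_k$, $\hat A=\mathrm{Circ}(\hat a_0,\dots,\hat a_{n-1})$, $\hat a_i=\min\{\underline a,\overline a_i\}$. *)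

theory Defs
  imports Complex_Main
begin

text \<open>Max-plus (max-times) algebra on nonnegative reals. An n x n matrix is a function
  nat => nat => real, a vector is nat => real; only indices below n are relevant.\<close>

definition mmult :: "nat \<Rightarrow> (nat \<Rightarrow> nat \<Rightarrow> real) \<Rightarrow> (nat \<Rightarrow> nat \<Rightarrow> real) \<Rightarrow> (nat \<Rightarrow> nat \<Rightarrow> real)" where
  "mmult n A B = (\<lambda>i j. Max ((\<lambda>k. A i k * B k j) ` {..<n}))"

definition mid :: "nat \<Rightarrow> nat \<Rightarrow> real" where
  "mid = (\<lambda>i j. if i = j then 1 else 0)"

fun mpow :: "nat \<Rightarrow> (nat \<Rightarrow> nat \<Rightarrow> real) \<Rightarrow> nat \<Rightarrow> (nat \<Rightarrow> nat \<Rightarrow> real)" where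
  "mpow n A 0 = mid"
| "mpow n A (Suc t) = mmult n A (mpow n A t)"

definition mvec :: "nat \<Rightarrow> (nat \<Rightarrow> nat \<Rightarrow> real) \<Rightarrow> (nat \<Rightarrow> real) \<Rightarrow> (nat \<Rightarrow> real)" where
  "mvec n A x = (\<lambda>i. Max ((\<lambda>j. A i j * x j) ` {..<n}))"

definition cycle_weight :: "(nat \<Rightarrow> nat \<Rightarrow> real) \<Rightarrow> nat list \<Rightarrow> real" where
  "cycle_weight A is = (\<Prod>j<length is. A (is ! j) (is ! ((j + 1) mod length is)))"

definition mlambda :: "nat \<Rightarrow> (nat \<Rightarrow> nat \<Rightarrow> real) \<Rightarrow> real" where
  "mlambda n A = Max {root (length is) (cycle_weight A is) | is.
      is \<noteq> [] \<and> length is \<le> n \<and> set is \<subseteq> {..<n}}"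

definition Attr :: "nat \<Rightarrow> (nat \<Rightarrow> nat \<Rightarrow> real) \<Rightarrow> (nat \<Rightarrow> real) set" where
  "Attr n A = {x. (\<forall>i<n. 0 \<le> x i) \<and>
     (\<exists>t. \<forall>i<n. mvec n (mpow n A (t + 1)) x i = mlambda n A * mvec n (mpow n A t) x i)}"

definition Circ :: "nat \<Rightarrow> (nat \<Rightarrow> real) \<Rightarrow> (nat \<Rightarrow> nat \<Rightarrow> real)" where
  "Circ n a = (\<lambda>i j. a ((j + n - i) mod n))"

definition ival :: "real \<Rightarrow> real \<Rightarrow> bool \<Rightarrow> bool \<Rightarrow> real set" where
  "ival lo hi clo chi = {x. (if clo then lo \<le> x else lo < x) \<and> (if chi then x \<le> hi else x < hi)}"

definition IC :: "nat \<Rightarrow> (nat \<Rightarrow> real set) \<Rightarrow> (nat \<Rightarrow> nat \<Rightarrow> real) set" where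
  "IC n I = {Circ n a | a. \<forall>t<n. a t \<in> I t}"

definition hat_a :: "nat \<Rightarrow> (nat \<Rightarrow> real) \<Rightarrow> (nat \<Rightarrow> real) \<Rightarrow> (nat \<Rightarrow> real)" where
  "hat_a n lo hi = (\<lambda>i. min (Max (lo ` {..<n})) (hi i))"

end

theory Submission imports Defs begin

definition wt :: "(nat\<Rightarrow>nat\<Rightarrow>real) \<Rightarrow> (nat \<Rightarrow> nat) \<Rightarrow> nat \<Rightarrow> real" where
  "wt C p m = (\<Prod>l<m. C (p l) (p (Suc l)))"

lemma Max_img_le_Max_img:
  assumes "finite K" "K \<noteq> {}" "\<And>k. k \<in> K \<Longrightarrow> f k \<le> g k"
  shows "Max (f ` K) \<le> Max (g ` K)"
proof -
  have "\<forall>a\<in>K. f a \<le> Max (g ` K)"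
    using assms by (meson Max_ge finite_imageI imageI order_trans)
  then show ?thesis using assms by (simp add: Max_le_iff)
qed

lemma mvec_mono:
  assumes "0 < n" "\<And>i j. 0 \<le> C i j" "\<And>j. j < n \<Longrightarrow> v j \<le> w j"
  shows "mvec n C v i \<le> mvec n C w i"
  unfolding mvec_def using assms
  by (intro Max_img_le_Max_img) (auto intro: mult_left_mono)

lemma mvec_mono_mat:
  assumes "0 < n" "\<And>i j. C i j \<le> D i j" "\<And>j. j < n \<Longrightarrow> 0 \<le> v j"
  shows "mvec n C v i \<le> mvec n D v i"
  unfolding mvec_def using assms
  by (intro Max_img_le_Max_img) (auto intro: mult_right_mono)

lemma mvec_cong:
  assumes "\<And>j. j < n \<Longrightarrow> v j = w j"
  shows "mvec n C v i = mvec n C w i"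
  unfolding mvec_def using assms by (metis (no_types, lifting) image_cong lessThan_iff)

lemma mvec_nonneg:
  assumes "0 < n" "\<And>i j. 0 \<le> C i j" "\<And>j. j < n \<Longrightarrow> 0 \<le> v j"
  shows "0 \<le> mvec n C v i"
proof -
  have "0 \<le> C i 0 * v 0" using assms by auto
  also have "\<dots> \<le> mvec n C v i" unfolding mvec_def using assms(1) by (intro Max_ge) auto
  finally show ?thesis .
qed

lemma iter_nonneg:
  assumes "0 < n" "\<And>i j. 0 \<le> C i j" "\<And>j. j < n \<Longrightarrow> 0 \<le> v j" "i < n"
  shows "0 \<le> (mvec n C ^^ m) v i"
  using assms(4)
proof (induction m arbitrary: i)
  case 0 then show ?case using assms by simp
next
  case (Suc m) then show ?case using assms by (simp add: mvec_nonneg)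
qed

lemma iter_mono:
  assumes "0 < n" "\<And>i j. 0 \<le> C i j" "\<And>j. j < n \<Longrightarrow> v j \<le> w j" "i < n"
  shows "(mvec n C ^^ m) v i \<le> (mvec n C ^^ m) w i"
  using assms(4)
proof (induction m arbitrary: i)
  case 0 then show ?case using assms by simp
next
  case (Suc m) then show ?case using assms by (simp add: mvec_mono)
qed

lemma iter_mono_mat:
  assumes "0 < n" "\<And>i j. 0 \<le> C i j" "\<And>i j. C i j \<le> D i j" "\<And>j. j < n \<Longrightarrow> 0 \<le> v j" "i < n"
  shows "(mvec n C ^^ m) v i \<le> (mvec n D ^^ m) v i"
  using assms(5)
proof (induction m arbitrary: i)
  case 0 then show ?case by simp
next
  case (Suc m)
  have D0: "\<And>i j. 0 \<le> D i j" using assms by (meson order_trans)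
  have "mvec n C ((mvec n C ^^ m) v) i \<le> mvec n C ((mvec n D ^^ m) v) i"
    using Suc assms by (intro mvec_mono) auto
  also have "\<dots> \<le> mvec n D ((mvec n D ^^ m) v) i"
    using assms D0 by (intro mvec_mono_mat iter_nonneg) auto
  finally show ?case by simp
qed

lemma wt_Suc: "wt C p (Suc m) = C (p 0) (p 1) * wt C (\<lambda>l. p (Suc l)) m"
  unfolding wt_def by (subst prod.lessThan_Suc_shift) simp

lemma walk_le:
  assumes "0 < n" "\<And>i j. 0 \<le> C i j" "\<And>j. j < n \<Longrightarrow> 0 \<le> v j" "\<forall>l\<le>m. p l < n"
  shows "wt C p m * v (p m) \<le> (mvec n C ^^ m) v (p 0)"
  using assms(4)
proof (induction m arbitrary: p)
  case 0 then show ?case by (simp add: wt_def)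
next
  case (Suc m)
  let ?q = "\<lambda>l. p (Suc l)"
  have IH: "wt C ?q m * v (?q m) \<le> (mvec n C ^^ m) v (?q 0)"
    using Suc by (intro Suc.IH) auto
  have "wt C p (Suc m) * v (p (Suc m)) = C (p 0) (p 1) * (wt C ?q m * v (?q m))"
    by (simp add: wt_Suc)
  also have "\<dots> \<le> C (p 0) (p 1) * (mvec n C ^^ m) v (p 1)"
    using IH assms by (intro mult_left_mono) auto
  also have "\<dots> \<le> mvec n C ((mvec n C ^^ m) v) (p 0)"
    unfolding mvec_def using Suc.prems by (intro Max_ge) auto
  finally show ?case by simp
qed

lemma walk_ex:
  assumes "0 < n" "i < n"
  shows "\<exists>p. p 0 = i \<and> (\<forall>l\<le>m. p l < n) \<and> (mvec n C ^^ m) v i = wt C p m * v (p m)"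
  using assms(2)
proof (induction m arbitrary: i)
  case 0 then show ?case by (intro exI[of _ "\<lambda>_. i"]) (simp add: wt_def)
next
  case (Suc m)
  let ?w = "(mvec n C ^^ m) v"
  have "Max ((\<lambda>k. C i k * ?w k) ` {..<n}) \<in> (\<lambda>k. C i k * ?w k) ` {..<n}"
    using assms by (intro Max_in) auto
  then obtain k where k: "k < n" "mvec n C ?w i = C i k * ?w k" unfolding mvec_def by auto
  obtain q where q: "q 0 = k" "\<forall>l\<le>m. q l < n" "?w k = wt C q m * v (q m)"
    using Suc.IH[OF k(1)] by blast
  define p where "p = (\<lambda>l. case l of 0 \<Rightarrow> i | Suc l' \<Rightarrow> q l')"
  have "\<forall>l\<le>Suc m. p l < n" using q Suc.prems by (auto simp: p_def split: nat.split)
  moreover have "(mvec n C ^^ Suc m) v i = wt C p (Suc m) * v (p (Suc m))"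
    using k q by (simp add: wt_Suc p_def)
  ultimately show ?case by (intro exI[of _ p]) (auto simp: p_def)
qed


lemma cut_walk:
  assumes "a < b" "b \<le> m" "p a = p b" "\<forall>l\<le>m. p l < n"
    and C01: "\<And>i j. 0 \<le> C i j" "\<And>i j. C i j \<le> 1"
  defines "q \<equiv> (\<lambda>l. if l \<le> a then p l else p (l + (b - a)))"
  shows "wt C p m \<le> wt C q (m - (b - a)) \<and> q 0 = p 0 \<and> q (m - (b - a)) = p m
         \<and> (\<forall>l \<le> m - (b - a). q l < n)"
proof -
  define d where "d = b - a"
  define E where "E = (\<lambda>l. C (p l) (p (Suc l)))"
  have E01: "\<And>l. 0 \<le> E l" "\<And>l. E l \<le> 1" using C01 by (auto simp: E_def)
  have wp: "wt C p m = prod E {0..<a} * prod E {a..<b} * prod E {b..<m}"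
    unfolding wt_def E_def lessThan_atLeast0 using assms(1,2)
    by (simp add: prod.atLeastLessThan_concat)
  have "wt C q (m - d) = prod (\<lambda>l. C (q l) (q (Suc l))) {0..<a} * prod (\<lambda>l. C (q l) (q (Suc l))) {a..<m-d}"
    unfolding wt_def lessThan_atLeast0 using assms(1,2) d_def
    by (simp add: prod.atLeastLessThan_concat)
  also have "prod (\<lambda>l. C (q l) (q (Suc l))) {0..<a} = prod E {0..<a}"
    by (rule prod.cong) (auto simp: q_def E_def)
  also have "prod (\<lambda>l. C (q l) (q (Suc l))) {a..<m-d} = prod (\<lambda>l. E (l + d)) {a..<m-d}"
    using assms(1,3) d_def by (intro prod.cong) (auto simp: q_def E_def)
  also have "\<dots> = prod E {a + d..<m - d + d}"
    by (rule prod.shift_bounds_nat_ivl[symmetric])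
  also have "{a + d..<m - d + d} = {b..<m}" using assms(1,2) d_def by auto
  finally have wq: "wt C q (m - d) = prod E {0..<a} * prod E {b..<m}" .
  have "prod E {a..<b} \<le> 1" using E01 by (intro prod_le_1) auto
  moreover have "0 \<le> prod E {0..<a} * prod E {b..<m}" using E01 by (intro mult_nonneg_nonneg prod_nonneg) auto
  ultimately have "wt C p m \<le> wt C q (m - d)" unfolding wp wq
    by (metis mult.commute mult.left_commute mult_left_le)
  moreover have "q (m - d) = p m"
  proof (cases "m - d \<le> a")
    case True then have "m = b" using assms(1,2) d_def by auto
    then show ?thesis using True assms(1,3) d_def by (simp add: q_def)
  next
    case False then show ?thesis using assms(1,2) d_def by (simp add: q_def)
  qed
  moreover have "\<forall>l \<le> m - d. q l < n" using assms(1,2,4) d_def by (auto simp: q_def)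
  ultimately show ?thesis using d_def by (simp add: q_def)
qed

lemma pigeon:
  assumes "n \<le> M" "\<forall>l\<le>M. f l < (n::nat)"
  shows "\<exists>a b. a < b \<and> b \<le> M \<and> f a = f b"
proof -
  have "\<not> inj_on f {..M}"
  proof
    assume "inj_on f {..M}"
    then have "card {..M} \<le> card {..<n}" by (rule card_inj_on_le) (use assms in auto)
    then show False using assms by simp
  qed
  then obtain x y where "x \<le> M" "y \<le> M" "x \<noteq> y" "f x = f y" unfolding inj_on_def by auto
  then show ?thesis by (metis linorder_neqE_nat)
qed

lemma mod_aux: "((x::int) mod n + n - u) mod n = (x - u) mod n"
  by (metis mod_add_left_eq mod_add_self2 mod_diff_cong)

lemma mod_edge:
  assumes "0 < (n::nat)"
  shows "((u + s) mod n + n - u mod n) mod n = s mod n"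
proof -
  have "u mod n < n" using assms by simp
  have "int (((u + s) mod n + n - u mod n) mod n) = (int ((u+s) mod n) + int n - int (u mod n)) mod int n"
    using \<open>u mod n < n\<close> by (simp add: of_nat_diff zmod_int)
  also have "\<dots> = int s mod int n"
    using mod_aux[of "int u + int s" "int n" "int u mod int n"] by (simp add: zmod_int mod_diff_right_eq)
  also have "\<dots> = int (s mod n)" by (simp add: zmod_int)
  finally show ?thesis by simp
qed

lemma circ_closed:
  assumes "0 < n" "s0 < n" "c s0 = 1"
  shows "wt (Circ n c) (\<lambda>l. (i + l * s0) mod n) m = 1"
  unfolding wt_def Circ_def
proof (rule prod.neutral, intro ballI)
  fix l
  have "(i + Suc l * s0) mod n = ((i + l * s0) + s0) mod n" by (simp add: algebra_simps)
  then have "((i + Suc l * s0) mod n + n - (i + l * s0) mod n) mod n = s0"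
    using mod_edge[OF assms(1), of "i + l*s0" s0] assms(2) by simp
  then show "c (((i + Suc l * s0) mod n + n - (i + l * s0) mod n) mod n) = 1" using assms by simp
qed

locale circ01 =
  fixes n :: nat and c :: "nat \<Rightarrow> real" and s0 :: nat
  assumes npos: "0 < n" and s0: "s0 < n" "c s0 = 1"
    and c01: "\<And>k. k < n \<Longrightarrow> 0 \<le> c k" "\<And>k. k < n \<Longrightarrow> c k \<le> 1"
begin

abbreviation "C \<equiv> Circ n c"
abbreviation "G \<equiv> mvec n C"

lemma C0: "0 \<le> C i j" unfolding Circ_def using c01 npos by simp
lemma C1: "C i j \<le> 1" unfolding Circ_def using c01 npos by simp

lemma up0:
  assumes "\<And>j. j < n \<Longrightarrow> 0 \<le> v j" "i < n"
  shows "v i \<le> (G ^^ (n * k)) v i"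
proof -
  let ?p = "\<lambda>l. (i + l * s0) mod n"
  have "wt C ?p (n*k) * v (?p (n*k)) \<le> (G ^^ (n*k)) v (?p 0)"
    using npos assms by (intro walk_le) (auto intro: C0)
  moreover have "?p (n*k) = i" "?p 0 = i" using assms(2) by (simp_all add: mult.assoc)
  ultimately show ?thesis using circ_closed[of n s0 c i "n*k"] npos s0 by simp
qed

lemma up:
  assumes "\<And>j. j < n \<Longrightarrow> 0 \<le> v j" "i < n"
  shows "(G ^^ m) v i \<le> (G ^^ (m + n * k)) v i"
proof -
  have "(G ^^ (m + n * k)) v = (G ^^ m) ((G ^^ (n*k)) v)" by (simp add: funpow_add)
  moreover have "(G ^^ m) v i \<le> (G ^^ m) ((G ^^ (n*k)) v) i"
    using npos assms by (intro iter_mono up0) (auto intro: C0)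
  ultimately show ?thesis by simp
qed

lemma down:
  assumes "\<And>j. j < n \<Longrightarrow> 0 \<le> v j" "i < n" "n \<le> M"
  shows "(G ^^ (n * M)) v i \<le> (G ^^ (n * (M - 1))) v i"
proof -
  obtain p where p: "p 0 = i" "\<forall>l\<le>n*M. p l < n" "(G ^^ (n*M)) v i = wt C p (n*M) * v (p (n*M))"
    using walk_ex[OF npos assms(2)] by blast
  have "\<forall>l\<le>M. p (n*l) < n" using p(2) by auto
  then obtain a b where ab: "a < b" "b \<le> M" "p (n*a) = p (n*b)"
    using pigeon[OF assms(3), of "\<lambda>l. p (n*l)"] by auto
  have na: "n*a < n*b" "n*b \<le> n*M" using ab npos by auto
  define q where "q = (\<lambda>l. if l \<le> n*a then p l else p (l + (n*b - n*a)))"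
  have cw: "wt C p (n*M) \<le> wt C q (n*M - (n*b - n*a)) \<and> q 0 = p 0 \<and> q (n*M - (n*b - n*a)) = p (n*M)
         \<and> (\<forall>l \<le> n*M - (n*b - n*a). q l < n)"
    unfolding q_def by (rule cut_walk) (use na ab p C0 C1 in auto)
  have e: "n*M - (n*b - n*a) = n * (M - (b - a))" using ab by (metis diff_mult_distrib2)
  have vnn: "0 \<le> v (p (n*M))" using assms(1) p(2) by auto
  have "(G ^^ (n*M)) v i \<le> wt C q (n * (M - (b - a))) * v (q (n * (M - (b - a))))"
    using p(3) cw e vnn by (simp add: mult_right_mono)
  also have "\<dots> \<le> (G ^^ (n * (M - (b - a)))) v (q 0)"
    using cw e npos assms(1) by (intro walk_le) (auto intro: C0)
  also have "\<dots> = (G ^^ (n * (M - (b - a)))) v i" using cw p(1) by simp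
  also have "\<dots> \<le> (G ^^ (n * (M - (b - a)) + n * (b - a - 1))) v i"
    by (rule up) (use assms in auto)
  also have "n * (M - (b - a)) + n * (b - a - 1) = n * (M - 1)"
    using ab by (simp add: diff_mult_distrib2[symmetric] add_mult_distrib2[symmetric])
  finally show ?thesis .
qed

lemma stab:
  assumes "\<And>j. j < n \<Longrightarrow> 0 \<le> v j" "i < n" "n \<le> M"
  shows "(G ^^ (n * M)) v i = (G ^^ (n * n)) v i"
  using assms(3)
proof (induction M rule: dec_induct)
  case base then show ?case by simp
next
  case (step k)
  have "(G ^^ (n * Suc k)) v i \<le> (G ^^ (n * (Suc k - 1))) v i"
    by (rule down) (use assms step in auto)
  then have "(G ^^ (n * Suc k)) v i \<le> (G ^^ (n * k)) v i" by simp
  moreover have "(G ^^ (n * k)) v i \<le> (G ^^ (n * k + n * 1)) v i" by (rule up) (use assms in auto)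
  ultimately show ?case using step by (simp add: algebra_simps)
qed

end

lemma main_norm:
  assumes npos: "0 < n" and s0: "s0 < n" "b s0 = 1"
    and b0: "\<And>k. k < n \<Longrightarrow> 0 \<le> b k" and bb: "\<And>k. k < n \<Longrightarrow> b k \<le> b' k"
    and b1: "\<And>k. k < n \<Longrightarrow> b' k \<le> 1"
    and x0: "\<And>j. j < n \<Longrightarrow> 0 \<le> x j"
    and att: "\<forall>i<n. (mvec n (Circ n b) ^^ Suc t) x i = (mvec n (Circ n b) ^^ t) x i"
  shows "\<exists>K. \<forall>i<n. (mvec n (Circ n b') ^^ Suc K) x i = (mvec n (Circ n b') ^^ K) x i"
proof -
  have b'0: "\<And>k. k < n \<Longrightarrow> 0 \<le> b' k" using b0 bb by (meson order_trans)
  have b'1: "b' s0 = 1" using bb[OF s0(1)] b1[OF s0(1)] s0 by simp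
  interpret B: circ01 n b s0 using npos s0 b0 bb b1 by unfold_locales (auto intro: order_trans)
  interpret B': circ01 n b' s0 using npos s0 b'0 b'1 b1 by unfold_locales auto
  let ?F = "mvec n (Circ n b)" and ?G = "mvec n (Circ n b')"
  have CC: "\<And>i j. Circ n b i j \<le> Circ n b' i j" unfolding Circ_def using bb npos by simp
  have fixk: "\<forall>i<n. (?F ^^ (t + k)) x i = (?F ^^ t) x i" for k
  proof (induction k)
    case 0 then show ?case by simp
  next
    case (Suc k)
    show ?case
    proof (intro allI impI)
      fix i assume "i < n"
      have "(?F ^^ (t + Suc k)) x i = ?F ((?F ^^ (t + k)) x) i" by simp
      also have "\<dots> = ?F ((?F ^^ t) x) i" using Suc by (intro mvec_cong) auto
      also have "\<dots> = (?F ^^ t) x i" using att \<open>i < n\<close> by simp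
      finally show "(?F ^^ (t + Suc k)) x i = (?F ^^ t) x i" .
    qed
  qed
  define j where "j = n * (t + 1)"
  have "1 * (t + 1) \<le> n * (t + 1)" using npos by (intro mult_le_mono1) simp
  then have jt: "t \<le> j" unfolding j_def by simp
  define y where "y = (?F ^^ j) x"
  have y_eq: "\<forall>i<n. y i = (?F ^^ t) x i" using fixk[of "j - t"] jt unfolding y_def by simp
  have y0: "\<And>i. i < n \<Longrightarrow> 0 \<le> y i" unfolding y_def using npos x0 B.C0 by (intro iter_nonneg) auto
  have Fy: "\<And>i. i < n \<Longrightarrow> ?F y i = y i"
  proof -
    fix i assume i: "i < n"
    have "?F y i = ?F ((?F ^^ t) x) i" using y_eq by (intro mvec_cong) auto
    also have "\<dots> = (?F ^^ t) x i" using att i by simp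
    finally show "?F y i = y i" using y_eq i by simp
  qed
  have xy: "\<And>i. i < n \<Longrightarrow> x i \<le> y i"
    unfolding y_def j_def by (rule B.up0) (use x0 in auto)
  have yG: "\<And>i. i < n \<Longrightarrow> y i \<le> (?G ^^ j) x i"
    unfolding y_def using npos B.C0 CC x0 by (intro iter_mono_mat) auto
  define K where "K = n * n + j"
  have Kst: "\<And>i. i < n \<Longrightarrow> (?G ^^ K) x i = (?G ^^ (n*n)) x i"
  proof -
    fix i assume i: "i < n"
    have "K = n * (n + t + 1)" unfolding K_def j_def by (simp add: algebra_simps)
    then show "(?G ^^ K) x i = (?G ^^ (n*n)) x i" using B'.stab[of x i "n + t + 1"] x0 i by simp
  qed
  have GK: "\<And>i. i < n \<Longrightarrow> (?G ^^ K) x i = (?G ^^ (n*n)) y i"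
  proof -
    fix i assume i: "i < n"
    have "(?G ^^ (n*n)) x i \<le> (?G ^^ (n*n)) y i"
      using npos B'.C0 xy i by (intro iter_mono) auto
    moreover have "(?G ^^ (n*n)) y i \<le> (?G ^^ (n*n)) ((?G ^^ j) x) i"
      using npos B'.C0 yG i by (intro iter_mono) auto
    moreover have "(?G ^^ (n*n)) ((?G ^^ j) x) i = (?G ^^ K) x i"
      unfolding K_def by (simp add: funpow_add)
    ultimately show "(?G ^^ K) x i = (?G ^^ (n*n)) y i" using Kst[OF i] by linarith
  qed
  have Gy: "\<And>i. i < n \<Longrightarrow> y i \<le> ?G y i"
  proof -
    fix i assume i: "i < n"
    have "?F y i \<le> ?G y i" using npos CC y0 by (intro mvec_mono_mat) auto
    then show "y i \<le> ?G y i" using Fy[OF i] by simp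
  qed
  have Gy0: "\<And>j. j < n \<Longrightarrow> 0 \<le> (?G ^^ m) y j" for m
    using npos B'.C0 y0 by (intro iter_nonneg) auto
  have incr: "\<And>i. i < n \<Longrightarrow> (?G ^^ m) y i \<le> (?G ^^ (m + k)) y i" for m k
  proof (induction k)
    case 0 then show ?case by simp
  next
    case (Suc k)
    have "(?G ^^ (m + k)) y i \<le> (?G ^^ (m + k)) (?G y) i"
      using npos B'.C0 Gy Suc.prems by (intro iter_mono) auto
    also have "(?G ^^ (m + k)) (?G y) = (?G ^^ (m + Suc k)) y"
      by (simp add: funpow_Suc_right del: funpow.simps)
    finally have "(?G ^^ (m + k)) y i \<le> (?G ^^ (m + Suc k)) y i" .
    then show ?case using Suc.IH[OF Suc.prems] by linarith
  qed
  show ?thesis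
  proof (intro exI allI impI)
    fix i assume i: "i < n"
    have "(?G ^^ Suc K) x i = ?G ((?G ^^ K) x) i" by simp
    also have "\<dots> = ?G ((?G ^^ (n*n)) y) i" using GK by (intro mvec_cong) auto
    also have "\<dots> = (?G ^^ (n*n + 1)) y i" by simp
    finally have e1: "(?G ^^ Suc K) x i = (?G ^^ (n*n + 1)) y i" .
    have "(?G ^^ (n*n)) y i \<le> (?G ^^ (n*n + 1)) y i" using incr[OF i] by blast
    moreover have "(?G ^^ (n*n + 1)) y i \<le> (?G ^^ (n*n + 1 + (n - 1))) y i" using incr[OF i] by blast
    moreover have "n*n + 1 + (n - 1) = n * (n + 1)" using npos by (simp add: algebra_simps)
    moreover have "(?G ^^ (n * (n+1))) y i = (?G ^^ (n*n)) y i" using B'.stab[of y i "n + 1"] y0 i by simp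
    ultimately have "(?G ^^ (n*n + 1)) y i = (?G ^^ (n*n)) y i" by (metis order_antisym)
    then show "(?G ^^ Suc K) x i = (?G ^^ K) x i" using e1 GK[OF i] by simp
  qed
qed


lemma mvec_mmult:
  assumes npos: "0 < n" and C0: "\<And>i j. 0 \<le> C i j" and x0: "\<And>j. j < n \<Longrightarrow> 0 \<le> x j"
  shows "mvec n (mmult n C P) x i = mvec n C (mvec n P x) i"
proof (rule order_antisym)
  have fin: "finite {..<n}" "{..<n} \<noteq> {}" using npos by auto
  show "mvec n (mmult n C P) x i \<le> mvec n C (mvec n P x) i"
    unfolding mvec_def[of n "mmult n C P"]
  proof (subst Max_le_iff, (use fin in auto)[2], safe)
    fix j assume j: "j < n"
    have "mmult n C P i j \<in> (\<lambda>k. C i k * P k j) ` {..<n}"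
      unfolding mmult_def using fin by (intro Max_in) auto
    then obtain k where k: "k < n" "mmult n C P i j = C i k * P k j" by auto
    have "P k j * x j \<le> mvec n P x k" unfolding mvec_def using j by (intro Max_ge) auto
    then have "C i k * (P k j * x j) \<le> C i k * mvec n P x k" using C0 by (intro mult_left_mono) auto
    also have "\<dots> \<le> mvec n C (mvec n P x) i" unfolding mvec_def[of n C] using k by (intro Max_ge) auto
    finally show "mmult n C P i j * x j \<le> mvec n C (mvec n P x) i" using k by (simp add: mult.assoc)
  qed
  show "mvec n C (mvec n P x) i \<le> mvec n (mmult n C P) x i"
    unfolding mvec_def[of n C]
  proof (subst Max_le_iff, (use fin in auto)[2], safe)
    fix k assume k: "k < n"
    have "mvec n P x k \<in> (\<lambda>j. P k j * x j) ` {..<n}"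
      unfolding mvec_def using fin by (intro Max_in) auto
    then obtain j where j: "j < n" "mvec n P x k = P k j * x j" by auto
    have "C i k * P k j \<le> mmult n C P i j" unfolding mmult_def using k by (intro Max_ge) auto
    then have "C i k * P k j * x j \<le> mmult n C P i j * x j" using x0 j by (intro mult_right_mono) auto
    also have "\<dots> \<le> mvec n (mmult n C P) x i" unfolding mvec_def[of n "mmult n C P"] using j by (intro Max_ge) auto
    finally show "C i k * mvec n P x k \<le> mvec n (mmult n C P) x i" using j by (simp add: mult.assoc)
  qed
qed

lemma mpow_iter:
  assumes npos: "0 < n" and C0: "\<And>i j. 0 \<le> C i j" and x0: "\<And>j. j < n \<Longrightarrow> 0 \<le> x j"
    and i: "i < n"
  shows "mvec n (mpow n C m) x i = (mvec n C ^^ m) x i"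
  using i
proof (induction m arbitrary: i)
  case 0
  have "mvec n mid x i = x i"
    unfolding mvec_def mid_def
  proof (rule Max_eqI)
    show "finite ((\<lambda>j. (if i = j then 1 else 0) * x j) ` {..<n})" by simp
    show "\<And>y. y \<in> (\<lambda>j. (if i = j then 1 else 0) * x j) ` {..<n} \<Longrightarrow> y \<le> x i"
      using x0 0 by auto
    show "x i \<in> (\<lambda>j. (if i = j then 1 else 0) * x j) ` {..<n}" using 0 by force
  qed
  then show ?case by simp
next
  case (Suc m)
  have "mvec n (mpow n C (Suc m)) x i = mvec n C (mvec n (mpow n C m) x) i"
    using mvec_mmult[OF npos C0 x0] by simp
  also have "\<dots> = mvec n C ((mvec n C ^^ m) x) i" using Suc.IH by (intro mvec_cong) auto
  finally show ?case by simp
qed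

lemma Max_scale:
  assumes "finite K" "K \<noteq> {}" "0 \<le> (d::real)"
  shows "Max ((\<lambda>k. f k * d) ` K) = Max (f ` K) * d"
proof -
  have "mono (\<lambda>y::real. y * d)" using assms(3) by (intro monoI mult_right_mono)
  from mono_Max_commute[OF this, of "f ` K"] assms show ?thesis by (simp add: image_image)
qed

lemma iter_scale:
  assumes npos: "0 < n" and c: "0 < (c::real)"
  shows "(mvec n (\<lambda>i j. C i j / c) ^^ m) v i = (mvec n C ^^ m) v i / c ^ m"
proof (induction m arbitrary: i)
  case 0 then show ?case by simp
next
  case (Suc m)
  have "(mvec n (\<lambda>i j. C i j / c) ^^ Suc m) v i
        = Max ((\<lambda>j. (C i j * (mvec n C ^^ m) v j) * (1 / c ^ Suc m)) ` {..<n})"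
    using Suc.IH unfolding mvec_def by (simp add: field_simps)
  also have "\<dots> = (mvec n C ^^ Suc m) v i / c ^ Suc m"
    using npos c by (subst Max_scale) (auto simp: mvec_def)
  finally show ?case .
qed

lemma mlambda_circ:
  assumes npos: "0 < n" and c0: "\<And>k. k < n \<Longrightarrow> 0 \<le> c k"
  shows "mlambda n (Circ n c) = Max (c ` {..<n})"
  unfolding mlambda_def
proof (rule Max_eqI)
  let ?M = "Max (c ` {..<n})"
  let ?f = "\<lambda>ls. root (length ls) (cycle_weight (Circ n c) ls)"
  have "{?f ls | ls. ls \<noteq> [] \<and> length ls \<le> n \<and> set ls \<subseteq> {..<n}}
        \<subseteq> ?f ` {xs. set xs \<subseteq> {..<n} \<and> length xs \<le> n}" by auto
  then show "finite {?f ls | ls. ls \<noteq> [] \<and> length ls \<le> n \<and> set ls \<subseteq> {..<n}}"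
    by (rule finite_subset) (intro finite_imageI finite_lists_length_le, simp)
  have fin: "finite (c ` {..<n})" "c ` {..<n} \<noteq> {}" using npos by auto
  have ent: "0 \<le> Circ n c i j \<and> Circ n c i j \<le> ?M" for i j
    unfolding Circ_def using npos c0 fin by (auto intro: Max_ge)
  have M0: "0 \<le> ?M" using ent by (meson order_trans)
  show "y \<le> ?M" if yin: "y \<in> {?f ls | ls. ls \<noteq> [] \<and> length ls \<le> n \<and> set ls \<subseteq> {..<n}}" for y
  proof -
    obtain ls where ls: "y = ?f ls" "ls \<noteq> []" using yin by auto
    have "cycle_weight (Circ n c) ls \<le> (\<Prod>j<length ls. ?M)"
      unfolding cycle_weight_def using ent by (intro prod_mono) auto
    also have "\<dots> = ?M ^ length ls" by simp
    finally have "y \<le> root (length ls) (?M ^ length ls)"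
      using ls by (simp add: real_root_le_mono)
    also have "\<dots> = ?M" using ls M0 by (simp add: real_root_power_cancel)
    finally show ?thesis .
  qed
  obtain s0 where s0: "s0 < n" "c s0 = ?M" using Max_in[OF fin] by auto
  define ls where "ls = map (\<lambda>j. j * s0 mod n) [0..<n]"
  have len: "length ls = n" unfolding ls_def by simp
  have "cycle_weight (Circ n c) ls = (\<Prod>j<n. ?M)"
    unfolding cycle_weight_def len
  proof (rule prod.cong[OF refl])
    fix j assume j: "j \<in> {..<n}"
    have a: "ls ! j = j * s0 mod n" using j unfolding ls_def by simp
    have b: "ls ! ((j + 1) mod n) = (j * s0 + s0) mod n"
    proof -
      have "ls ! ((j + 1) mod n) = ((j + 1) mod n) * s0 mod n" using npos unfolding ls_def by simp
      also have "\<dots> = ((j + 1) * s0) mod n" by (rule mod_mult_left_eq)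
      also have "(j + 1) * s0 = j * s0 + s0" by simp
      finally show ?thesis .
    qed
    show "Circ n c (ls ! j) (ls ! ((j + 1) mod n)) = ?M"
      unfolding a b Circ_def using mod_edge[OF npos, of "j*s0" s0] s0 by simp
  qed
  then have "?f ls = ?M" using len npos M0 by (simp add: real_root_power_cancel)
  moreover have "ls \<noteq> [] \<and> length ls \<le> n \<and> set ls \<subseteq> {..<n}"
    using len npos unfolding ls_def by auto
  ultimately show "?M \<in> {?f ls | ls. ls \<noteq> [] \<and> length ls \<le> n \<and> set ls \<subseteq> {..<n}}" by force
qed


theorem corollary4:
  fixes n :: nat and lo hi :: "nat \<Rightarrow> real" and clo chi :: "nat \<Rightarrow> bool"
    and x :: "nat \<Rightarrow> real"
  assumes "n \<ge> 1"
    and "\<forall>t<n. 0 \<le> lo t"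
    and "\<forall>t<n. ival (lo t) (hi t) (clo t) (chi t) \<noteq> {}"
    and "\<forall>i<n. 0 \<le> x i"
    and "Circ n (hat_a n lo hi) \<in> IC n (\<lambda>t. ival (lo t) (hi t) (clo t) (chi t))"
  shows "(\<exists>A\<in>IC n (\<lambda>t. ival (lo t) (hi t) (clo t) (chi t)). x \<in> Attr n A)
         \<longleftrightarrow> x \<in> Attr n (Circ n (hat_a n lo hi))"
proof
  assume "x \<in> Attr n (Circ n (hat_a n lo hi))"
  then show "\<exists>A\<in>IC n (\<lambda>t. ival (lo t) (hi t) (clo t) (chi t)). x \<in> Attr n A" using assms(5) by blast
next
  assume "\<exists>A\<in>IC n (\<lambda>t. ival (lo t) (hi t) (clo t) (chi t)). x \<in> Attr n A"
  then obtain a where aI: "\<forall>t<n. a t \<in> ival (lo t) (hi t) (clo t) (chi t)" and xA: "x \<in> Attr n (Circ n a)"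
    unfolding IC_def by blast
  have npos: "0 < n" using assms(1) by simp
  have x0: "\<And>j. j < n \<Longrightarrow> 0 \<le> x j" using assms(4) by simp
  have ivb: "lo t \<le> z \<and> z \<le> hi t" if "z \<in> ival (lo t) (hi t) (clo t) (chi t)" for z t
    using that unfolding ival_def by (auto split: if_splits)
  have lohi: "\<And>t. t < n \<Longrightarrow> lo t \<le> hi t" using assms(3) ivb by (meson equals0I order_trans)
  have aint: "\<And>t. t < n \<Longrightarrow> lo t \<le> a t \<and> a t \<le> hi t" using aI ivb by blast
  have lo0: "\<And>t. t < n \<Longrightarrow> 0 \<le> lo t" using assms(2) by simp
  define L where "L = Max (lo ` {..<n})"
  have finlo: "finite (lo ` {..<n})" "lo ` {..<n} \<noteq> {}" using npos by auto
  obtain t0 where t0: "t0 < n" "lo t0 = L" using Max_in[OF finlo] L_def by auto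
  have loL: "\<And>t. t < n \<Longrightarrow> lo t \<le> L" unfolding L_def using finlo by auto
  have L0: "0 \<le> L" using lo0 t0 by force
  define ah where "ah = hat_a n lo hi"
  have ah: "\<And>t. ah t = min L (hi t)" unfolding ah_def hat_a_def L_def by simp
  have ah0: "\<And>t. t < n \<Longrightarrow> 0 \<le> ah t" using ah L0 lohi lo0 by (smt (verit))
  have ahL: "Max (ah ` {..<n}) = L"
  proof (rule Max_eqI)
    show "finite (ah ` {..<n})" by simp
    show "\<And>y. y \<in> ah ` {..<n} \<Longrightarrow> y \<le> L" using ah by auto
    have "ah t0 = L" using ah t0 lohi[OF t0(1)] by simp
    then show "L \<in> ah ` {..<n}" using t0 by force
  qed
  have lamh: "mlambda n (Circ n ah) = L" using mlambda_circ[OF npos ah0] ahL by simp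
  have Ch0: "\<And>i j. 0 \<le> Circ n ah i j" unfolding Circ_def using ah0 npos by simp
  from xA obtain t where tA: "\<forall>i<n. mvec n (mpow n (Circ n a) (t + 1)) x i
      = mlambda n (Circ n a) * mvec n (mpow n (Circ n a) t) x i"
    unfolding Attr_def by blast
  show "x \<in> Attr n (Circ n (hat_a n lo hi))"
  proof (cases "L = 0")
    case True
    have z0: "ah k = 0" if "k < n" for k
      using ah[of k] True lohi[OF that] lo0[OF that] by simp
    have z: "\<And>i j. Circ n ah i j = 0" unfolding Circ_def using z0 npos by simp
    have "\<forall>i<n. mvec n (mpow n (Circ n ah) (0 + 1)) x i = mlambda n (Circ n ah) * mvec n (mpow n (Circ n ah) 0) x i"
    proof (intro allI impI)
      fix i assume i: "i < n"
      have "mvec n (mpow n (Circ n ah) (0 + 1)) x i = mvec n (Circ n ah) x i"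
        using mpow_iter[of n "Circ n ah" x i 1] npos Ch0 x0 i by simp
      also have "\<dots> = 0" unfolding mvec_def z using npos by (auto simp add: image_constant_conv)
      finally show "mvec n (mpow n (Circ n ah) (0 + 1)) x i = mlambda n (Circ n ah) * mvec n (mpow n (Circ n ah) 0) x i"
        using lamh True by simp
    qed
    then show ?thesis unfolding Attr_def ah_def using assms(4) by blast
  next
    case False
    then have Lpos: "0 < L" using L0 by simp
    have a0: "\<And>k. k < n \<Longrightarrow> 0 \<le> a k" using aint lo0 by (meson order_trans)
    define lam where "lam = Max (a ` {..<n})"
    have fina: "finite (a ` {..<n})" "a ` {..<n} \<noteq> {}" using npos by auto
    obtain s0 where s0: "s0 < n" "a s0 = lam" using Max_in[OF fina] lam_def by auto
    have alam: "\<And>k. k < n \<Longrightarrow> a k \<le> lam" unfolding lam_def using fina by auto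
    have Llam: "L \<le> lam" using t0 aint[OF t0(1)] alam[OF t0(1)] by simp
    have lampos: "0 < lam" using Lpos Llam by simp
    have lamA: "mlambda n (Circ n a) = lam" using mlambda_circ[OF npos a0] lam_def by simp
    have Ca0: "\<And>i j. 0 \<le> Circ n a i j" unfolding Circ_def using a0 npos by simp
    define b where "b = (\<lambda>k. a k / lam)"
    define b' where "b' = (\<lambda>k. ah k / L)"
    have Cb: "Circ n b = (\<lambda>i j. Circ n a i j / lam)" unfolding Circ_def b_def by simp
    have Cb': "Circ n b' = (\<lambda>i j. Circ n ah i j / L)" unfolding Circ_def b'_def by simp
    have iterA: "\<And>m i. i < n \<Longrightarrow> mvec n (mpow n (Circ n a) m) x i = (mvec n (Circ n a) ^^ m) x i"
      by (rule mpow_iter) (use npos Ca0 x0 in auto)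
    have iterH: "\<And>m i. i < n \<Longrightarrow> mvec n (mpow n (Circ n ah) m) x i = (mvec n (Circ n ah) ^^ m) x i"
      by (rule mpow_iter) (use npos Ch0 x0 in auto)
    have attB: "\<forall>i<n. (mvec n (Circ n b) ^^ Suc t) x i = (mvec n (Circ n b) ^^ t) x i"
    proof (intro allI impI)
      fix i assume i: "i < n"
      have e: "(mvec n (Circ n a) ^^ Suc t) x i = lam * (mvec n (Circ n a) ^^ t) x i"
      proof -
        have "mvec n (mpow n (Circ n a) (t+1)) x i = lam * mvec n (mpow n (Circ n a) t) x i"
          using tA i lamA by metis
        then show ?thesis by (simp only: iterA[OF i] Suc_eq_plus1)
      qed
      show "(mvec n (Circ n b) ^^ Suc t) x i = (mvec n (Circ n b) ^^ t) x i"
        unfolding Cb iter_scale[OF npos lampos] e using lampos by simp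
    qed
    have bb: "b k \<le> b' k" if k: "k < n" for k
    proof -
      have "a k * L \<le> lam * L" using alam[OF k] L0 by (intro mult_right_mono)
      moreover have "a k * L \<le> hi k * lam" using aint[OF k] Llam a0[OF k] L0
        by (intro mult_mono) auto
      ultimately have "a k * L \<le> ah k * lam" unfolding ah by (simp add: min_def mult.commute)
      then show ?thesis unfolding b_def b'_def using Lpos lampos by (simp add: field_simps)
    qed
    obtain K where K: "\<forall>i<n. (mvec n (Circ n b') ^^ Suc K) x i = (mvec n (Circ n b') ^^ K) x i"
    proof (rule exE[OF main_norm[OF npos s0(1), of b b' x t]])
      show "b s0 = 1" using s0 lampos by (simp add: b_def)
      show "\<And>k. k < n \<Longrightarrow> 0 \<le> b k" using a0 lampos by (simp add: b_def)
      show "\<And>k. k < n \<Longrightarrow> b k \<le> b' k" by (rule bb)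
      show "\<And>k. k < n \<Longrightarrow> b' k \<le> 1" using ah Lpos by (simp add: b'_def)
      show "\<And>j. j < n \<Longrightarrow> 0 \<le> x j" by (rule x0)
      show "\<forall>i<n. (mvec n (Circ n b) ^^ Suc t) x i = (mvec n (Circ n b) ^^ t) x i" by (rule attB)
    qed blast
    have "\<forall>i<n. mvec n (mpow n (Circ n ah) (K + 1)) x i = mlambda n (Circ n ah) * mvec n (mpow n (Circ n ah) K) x i"
    proof (intro allI impI)
      fix i assume i: "i < n"
      have e: "(mvec n (Circ n ah) ^^ m) x i = L ^ m * (mvec n (Circ n b') ^^ m) x i" for m
        unfolding Cb' iter_scale[OF npos Lpos] using Lpos by simp
      show "mvec n (mpow n (Circ n ah) (K + 1)) x i = mlambda n (Circ n ah) * mvec n (mpow n (Circ n ah) K) x i"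
        unfolding iterH[OF i] lamh e using K i by simp
    qed
    then show ?thesis unfolding Attr_def ah_def using assms(4) by blast
  qed
qed

end
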